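(* Let $(X,S)$ be an $S$-metric space, $r\ge0$, and let $\{x_n\}$ be an $r$-statistically convergent sequence in $X$. Then $st\text{-}LIM^r x_n$ is a closed set in the topology induced by $S$.
   Context: An $S$-metric on a nonempty set $X$ is a function $S:X^3\to[0,\infty)$ such that for all $x,y,z,a\in X$: $S(x,y,z)=0$ if and only if $x=y=z$, and $S(x,y,z)\le S(x,x,a)+S(y,y,a)+S(z,z,a)$. The open balls $B_S(x,r)=\{y\in X: S(y,y,x)<r\}$ form a base of the topology induced by $S$. For $B\subset\mathbb N$ the natural density is $\delta(B)=\lim_{n\to\infty}\frac{|\{k\in B:k\le n\}|}{n}$ when the limit exists. For $r\ge0$, $\{x_n\}$ is $r$-statistically convergent to $x$ if for every $\varepsilon>0$, $\delta(\{n\in\mathbb N: S(x_n,x_n,x)\ge r+\varepsilon\})=0$; $st\text{-}LIM^r x_n$ denotes the set of all such $x\in X$, and $\{x_n\}$ is called $r$-statistically convergent if this set is nonempty. *)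

theory Defs
  imports "HOL-Analysis.Analysis"
begin

definition S_metric :: "'a set \<Rightarrow> ('a \<Rightarrow> 'a \<Rightarrow> 'a \<Rightarrow> real) \<Rightarrow> bool" where
  "S_metric X S \<longleftrightarrow> X \<noteq> {} \<and>
     (\<forall>x\<in>X. \<forall>y\<in>X. \<forall>z\<in>X. S x y z \<ge> 0) \<and>
     (\<forall>x\<in>X. \<forall>y\<in>X. \<forall>z\<in>X. S x y z = 0 \<longleftrightarrow> x = y \<and> y = z) \<and>
     (\<forall>x\<in>X. \<forall>y\<in>X. \<forall>z\<in>X. \<forall>a\<in>X. S x y z \<le> S x x a + S y y a + S z z a)"

definition S_ball :: "'a set \<Rightarrow> ('a \<Rightarrow> 'a \<Rightarrow> 'a \<Rightarrow> real) \<Rightarrow> 'a \<Rightarrow> real \<Rightarrow> 'a set" where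
  "S_ball X S x r = {y \<in> X. S y y x < r}"

definition S_topology :: "'a set \<Rightarrow> ('a \<Rightarrow> 'a \<Rightarrow> 'a \<Rightarrow> real) \<Rightarrow> 'a topology" where
  "S_topology X S = topology (\<lambda>U. U \<subseteq> X \<and> (\<forall>x\<in>U. \<exists>r>0. S_ball X S x r \<subseteq> U))"

definition density_zero :: "nat set \<Rightarrow> bool" where
  "density_zero B \<longleftrightarrow>
     (\<lambda>n. real (card {k \<in> B. 1 \<le> k \<and> k \<le> n}) / real n) \<longlonglongrightarrow> 0"

definition st_LIM_r ::
  "'a set \<Rightarrow> ('a \<Rightarrow> 'a \<Rightarrow> 'a \<Rightarrow> real) \<Rightarrow> real \<Rightarrow> (nat \<Rightarrow> 'a) \<Rightarrow> 'a set" where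
  "st_LIM_r X S r xs = {x \<in> X. \<forall>\<epsilon>>0.
      density_zero {n. 1 \<le> n \<and> S (xs n) (xs n) x \<ge> r + \<epsilon>}}"

end

theory Submission
  imports Defs
begin

lemma S_open_istop: "istopology (\<lambda>U. U \<subseteq> X \<and> (\<forall>x\<in>U. \<exists>r>0. S_ball X S x r \<subseteq> U))"
  unfolding istopology_def
proof (rule conjI; intro allI impI)
  fix A B assume A: "A \<subseteq> X \<and> (\<forall>x\<in>A. \<exists>r>0. S_ball X S x r \<subseteq> A)"
    and B: "B \<subseteq> X \<and> (\<forall>x\<in>B. \<exists>r>0. S_ball X S x r \<subseteq> B)"
  show "A \<inter> B \<subseteq> X \<and> (\<forall>x\<in>A \<inter> B. \<exists>r>0. S_ball X S x r \<subseteq> A \<inter> B)"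
  proof (intro conjI ballI)
    show "A \<inter> B \<subseteq> X" using A by blast
    fix x assume "x \<in> A \<inter> B"
    then obtain r1 r2 where "r1 > 0" "S_ball X S x r1 \<subseteq> A" "r2 > 0" "S_ball X S x r2 \<subseteq> B"
      using A B by blast
    then show "\<exists>r>0. S_ball X S x r \<subseteq> A \<inter> B"
      by (intro exI[of _ "min r1 r2"]) (auto simp: S_ball_def)
  qed
next
  fix K assume K: "\<forall>U\<in>K. U \<subseteq> X \<and> (\<forall>x\<in>U. \<exists>r>0. S_ball X S x r \<subseteq> U)"
  show "\<Union>K \<subseteq> X \<and> (\<forall>x\<in>\<Union>K. \<exists>r>0. S_ball X S x r \<subseteq> \<Union>K)"
  proof (intro conjI ballI)
    show "\<Union>K \<subseteq> X" using K by blast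
    fix x assume "x \<in> \<Union>K"
    then obtain U where "U \<in> K" "x \<in> U" by blast
    then obtain r where "r > 0" "S_ball X S x r \<subseteq> U" using K by blast
    then show "\<exists>r>0. S_ball X S x r \<subseteq> \<Union>K" using \<open>U \<in> K\<close> by blast
  qed
qed

lemma openin_S: "openin (S_topology X S) U \<longleftrightarrow> U \<subseteq> X \<and> (\<forall>x\<in>U. \<exists>r>0. S_ball X S x r \<subseteq> U)"
  unfolding S_topology_def topology_inverse'[OF S_open_istop] ..

lemma topspace_S: "topspace (S_topology X S) = X"
proof -
  have "openin (S_topology X S) X" unfolding openin_S
    by (auto simp: S_ball_def intro: exI[of _ 1])
  then have "X \<subseteq> topspace (S_topology X S)" by (rule openin_subset)
  moreover have "topspace (S_topology X S) \<subseteq> X"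
    using openin_topspace[of "S_topology X S"] unfolding openin_S by (elim conjE)
  ultimately show ?thesis by (rule subset_antisym[rotated])
qed

lemma density_zero_mono:
  assumes "density_zero B" "A \<subseteq> B"
  shows "density_zero A"
  unfolding density_zero_def
proof (rule tendsto_sandwich[of "\<lambda>n. 0" _ _ "\<lambda>n. real (card {k \<in> B. 1 \<le> k \<and> k \<le> n}) / real n"])
  show "\<forall>\<^sub>F n in sequentially. 0 \<le> real (card {k \<in> A. 1 \<le> k \<and> k \<le> n}) / real n" by simp
  have "\<And>n. card {k \<in> A. 1 \<le> k \<and> k \<le> n} \<le> card {k \<in> B. 1 \<le> k \<and> k \<le> n}"
    by (rule card_mono) (use assms(2) in auto)
  then show "\<forall>\<^sub>F n in sequentially. real (card {k \<in> A. 1 \<le> k \<and> k \<le> n}) / real n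
      \<le> real (card {k \<in> B. 1 \<le> k \<and> k \<le> n}) / real n"
    by (intro always_eventually allI divide_right_mono) simp_all
  show "(\<lambda>n. 0::real) \<longlonglongrightarrow> 0" by simp
  show "(\<lambda>n. real (card {k \<in> B. 1 \<le> k \<and> k \<le> n}) / real n) \<longlonglongrightarrow> 0"
    using assms(1) unfolding density_zero_def .
qed

lemma S_sym:
  assumes "S_metric X S" "x \<in> X" "y \<in> X"
  shows "S x x y = S y y x"
proof -
  have tri: "\<forall>x\<in>X. \<forall>y\<in>X. \<forall>z\<in>X. \<forall>a\<in>X. S x y z \<le> S x x a + S y y a + S z z a"
    using assms(1) unfolding S_metric_def by (elim conjE)
  have z: "\<forall>x\<in>X. \<forall>y\<in>X. \<forall>z\<in>X. S x y z = 0 \<longleftrightarrow> x = y \<and> y = z"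
    using assms(1) unfolding S_metric_def by (elim conjE)
  have "S x x y \<le> S x x x + S x x x + S y y x" using tri[rule_format, of x x y x] assms(2,3) by simp
  moreover have "S y y x \<le> S y y y + S y y y + S x x y" using tri[rule_format, of y y x y] assms(2,3) by simp
  moreover have "S x x x = 0" using bspec[OF bspec[OF bspec[OF z assms(2)] assms(2)] assms(2)] by simp
  moreover have "S y y y = 0" using bspec[OF bspec[OF bspec[OF z assms(3)] assms(3)] assms(3)] by simp
  ultimately show ?thesis by simp
qed

lemma arith_aux: "(a::real) \<le> b + b + c \<Longrightarrow> b < e/4 \<Longrightarrow> r + e \<le> a \<Longrightarrow> r + e/2 \<le> c"
  by linarith

theorem corollary4p1:
  fixes X :: "'a set" and S :: "'a \<Rightarrow> 'a \<Rightarrow> 'a \<Rightarrow> real"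
    and r :: real and xs :: "nat \<Rightarrow> 'a"
  assumes "S_metric X S"
    and "r \<ge> 0"
    and "\<forall>n. xs n \<in> X"
    and "st_LIM_r X S r xs \<noteq> {}"
  shows "closedin (S_topology X S) (st_LIM_r X S r xs)"
proof -
  let ?L = "st_LIM_r X S r xs"
  have op: "openin (S_topology X S) (X - ?L)"
    unfolding openin_S
  proof (intro conjI ballI)
    show "X - ?L \<subseteq> X" by blast
    fix x assume x: "x \<in> X - ?L"
    then obtain \<epsilon> where e: "\<epsilon> > 0" "\<not> density_zero {n. 1 \<le> n \<and> S (xs n) (xs n) x \<ge> r + \<epsilon>}"
      unfolding st_LIM_r_def by auto
    show "\<exists>d>0. S_ball X S x d \<subseteq> X - ?L"
    proof (intro exI[of _ "\<epsilon>/4"] conjI subsetI)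
      show "\<epsilon>/4 > 0" using e by simp
      fix y assume y: "y \<in> S_ball X S x (\<epsilon>/4)"
      hence yX: "y \<in> X" and yd: "S y y x < \<epsilon>/4" by (auto simp: S_ball_def)
      show "y \<in> X - ?L"
      proof (intro DiffI notI)
        show "y \<in> X" by (rule yX)
      next
        assume "y \<in> ?L"
        hence dz: "density_zero {n. 1 \<le> n \<and> S (xs n) (xs n) y \<ge> r + \<epsilon>/2}"
        proof -
          have A: "\<forall>\<epsilon>>0. density_zero {n. 1 \<le> n \<and> S (xs n) (xs n) y \<ge> r + \<epsilon>}"
            using \<open>y \<in> ?L\<close> unfolding st_LIM_r_def by simp
          have "\<epsilon>/2 > 0" using e(1) by simp
          then show ?thesis by (rule A[rule_format])
        qed
        have "{n. 1 \<le> n \<and> S (xs n) (xs n) x \<ge> r + \<epsilon>} \<subseteq> {n. 1 \<le> n \<and> S (xs n) (xs n) y \<ge> r + \<epsilon>/2}"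
        proof (rule subsetI)
          fix n assume "n \<in> {n. 1 \<le> n \<and> S (xs n) (xs n) x \<ge> r + \<epsilon>}"
          hence n1: "1 \<le> n" and nx: "r + \<epsilon> \<le> S (xs n) (xs n) x" by auto
          have xX: "x \<in> X" using x by (rule DiffD1)
          have xn: "xs n \<in> X" using assms(3) by (rule spec)
          have tri: "\<forall>x\<in>X. \<forall>y\<in>X. \<forall>z\<in>X. \<forall>a\<in>X. S x y z \<le> S x x a + S y y a + S z z a"
            using assms(1) unfolding S_metric_def by (elim conjE)
          have t: "S x x (xs n) \<le> S x x y + S x x y + S (xs n) (xs n) y"
            using bspec[OF bspec[OF bspec[OF bspec[OF tri xX] xX] xn] yX] .
          have s1: "S x x (xs n) = S (xs n) (xs n) x" by (rule S_sym[OF assms(1) xX xn])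
          have s2: "S x x y = S y y x" by (rule S_sym[OF assms(1) xX yX])
          have "r + \<epsilon>/2 \<le> S (xs n) (xs n) y"
            using arith_aux[OF t[unfolded s1 s2] yd nx] .
          then show "n \<in> {n. 1 \<le> n \<and> S (xs n) (xs n) y \<ge> r + \<epsilon>/2}" using n1 by simp
        qed
        from e(2) density_zero_mono[OF dz this] show False by (rule notE)
      qed
    qed
  qed
  have sub: "?L \<subseteq> X" unfolding st_LIM_r_def by (rule Collect_restrict)
  show ?thesis unfolding closedin_def topspace_S using sub op by (rule conjI)
qed

end
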